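(* Assume (K1), (K2), (L), (W1)–(W3) and the exponent conditions $\frac1{q_\Phi}=\frac1{q_{\mathsf F}}+\frac1{q_{\mathsf P}}$, $q_\Phi>d$, $\tilde q>d$ with $\frac1{\tilde q}=\frac2{q_\gamma}+\frac1{q_{\mathsf G}}$. Then: (i) for every $C_P>0$ there exist $C_B>0$ and $\bar r>0$ such that for all $x\in\Omega$, all $P\in\mathrm{GL}^+(d)$ with $|P|+|P^{-1}|\le C_P$, all $F\in\mathrm{GL}^+(d)$ and all $N\in\mathbb R^{d\times d}$ with $|N-\mathbf 1|<\bar r$, $|B(x,F,NP)-B(x,F,P)|\le C_B|N-\mathbf 1|\,(W(x,FP^{-1})+1)$; (ii) for every $C_P>0$ there exist $C_W>0$ and $\tilde r>0$ such that for all $x\in\Omega$, all $P_1,P_2\in\mathrm{GL}^+(d)$ with $|P_1|+|P_1^{-1}|\le C_P$ and $|P_1-P_2|\le\tilde r$, and all $F\in\mathrm{GL}^+(d)$, $|W(x,FP_1^{-1})-W(x,FP_2^{-1})-B(x,F,P_1):(P_1-P_2)|\le C_W(W(x,FP_1^{-1})+1)|P_1-P_2|^2$.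
   Context: Notation: $A:C=\mathrm{tr}(AC^\top)$, $|A|$ Frobenius norm, $\mathbf 1$ identity, $\mathrm{GL}^+(d)=\{\det A>0\}$, $A^{-\top}=(A^{-1})^\top$, $\mathbb M(F)$ the vector of all minors of $F$ (length $\mu_d$). $\Omega\subset\mathbb R^d$ bounded Lipschitz domain, $T>0$, exponents $q_\Phi,q_{\mathsf F},q_{\mathsf P},q_{\mathsf G},q_\gamma>1$ with $q_{\mathsf G}>d$. (K1) $K:\mathbb R^{d\times d}\to(-\infty,\infty]$ is $C^2$ on $\mathrm{GL}^+(d)$; (K2) $K(P)\ge C_1(|P|^{q_{\mathsf P}}+\det(P)^{-q_\gamma})-C_2$ on $\mathrm{GL}^+(d)$, $C_1,C_2>0$, $q_{\mathsf P},q_\gamma>d$. (L) $\ell\in C^1([0,T];W^{1,q_\Phi}(\Omega;\mathbb R^d)^* )$. $W:\Omega\times\mathbb R^{d\times d}\to[0,\infty]$ with $W(x,F)<\infty$ iff $F\in\mathrm{GL}^+(d)$ and: (W1) there are $j\in L^1(\Omega)$, $q_{\mathsf F}>d$, $C_3>0$ with $W(x,F)\ge j(x)+C_3|F|^{q_{\mathsf F}}$; (W2) $W(x,F)=\mathbb W(x,\mathbb M(F))$ for a normal integrand $\mathbb W$ convex in its second variable; (W3) there are $\delta,C_4,C_5>0$ such that for all $x\in\Omega$, $F\in\mathrm{GL}^+(d)$, $N$ with $|N-\mathbf 1|<\delta$: $W(x,\cdot)$ is differentiable on $\mathrm{GL}^+(d)$, $|F^\top\mathrm D_FW(x,F)|\le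 C_4(W(x,F)+1)$, and $|F^\top\mathrm D_FW(x,F)-(FN)^\top\mathrm D_FW(x,FN)|\le C_5|N-\mathbf 1|(W(x,F)+1)$. $B(x,F,P):=-(FP^{-1})^\top\mathrm D_FW(x,FP^{-1})P^{-\top}$ for $F,P\in\mathrm{GL}^+(d)$. *)

theory Defs
  imports "HOL-Analysis.Analysis"
begin

text \<open>Matrices are real^'d^'d; the Frobenius norm is norm, A:C is the inner product A \<bullet> C,
  the identity is mat 1, the inverse is matrix_inv.\<close>

definition GLp :: "(real^'d^'d) set" where
  "GLp = {A. det A > 0}"

definition mat_unit :: "'d \<Rightarrow> 'd \<Rightarrow> real^'d^'d" where
  "mat_unit i j = (\<chi> k l. if k = i \<and> l = j then 1 else 0)"

definition grad_mat :: "(real^'d^'d \<Rightarrow> real) \<Rightarrow> real^'d^'d \<Rightarrow> real^'d^'d" where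
  "grad_mat f A = (\<chi> i j. frechet_derivative f (at A) (mat_unit i j))"

definition C2_on :: "(real^'d^'d) set \<Rightarrow> (real^'d^'d \<Rightarrow> real) \<Rightarrow> bool" where
  "C2_on S f \<longleftrightarrow> (\<forall>A\<in>S. f differentiable (at A)) \<and>
     (\<forall>A\<in>S. grad_mat f differentiable (at A)) \<and>
     (\<forall>i j. continuous_on S (\<lambda>A. grad_mat (\<lambda>B. grad_mat f B $ i $ j) A))"

text \<open>Minors: for index sets I, J with card I = card J \<noteq> 0 the (I,J)-minor, with a fixed
  (choice-dependent) sign convention given by a fixed bijection between I and J; other
  coordinates are 0.  The vector of all minors lives in real^('d set \<times> 'd set).\<close>
definition minor :: "real^'d^'d \<Rightarrow> 'd set \<Rightarrow> 'd set \<Rightarrow> real" where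
  "minor F I J = (let q = (SOME q. bij_betw q I J) in
     (\<Sum>\<sigma> | \<sigma> permutes I. of_int (sign \<sigma>) * (\<Prod>i\<in>I. F $ i $ q (\<sigma> i))))"

definition minors :: "real^'d^'d \<Rightarrow> real^('d set \<times> 'd set)" where
  "minors F = (\<chi> p. if card (fst p) = card (snd p) \<and> fst p \<noteq> {} then minor F (fst p) (snd p) else 0)"

definition lsc :: "('a::topological_space \<Rightarrow> ereal) \<Rightarrow> bool" where
  "lsc f \<longleftrightarrow> (\<forall>c. closed {y. f y \<le> c})"

definition convex_ereal :: "('a::real_vector \<Rightarrow> ereal) \<Rightarrow> bool" where
  "convex_ereal f \<longleftrightarrow> (\<forall>y z t. 0 \<le> t \<and> t \<le> 1 \<longrightarrow>
      f (t *\<^sub>R y + (1 - t) *\<^sub>R z) \<le> ereal t * f y + ereal (1 - t) * f z)"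

definition normal_integrand :: "('x::euclidean_space) set \<Rightarrow> ('x \<Rightarrow> 'y::euclidean_space \<Rightarrow> ereal) \<Rightarrow> bool" where
  "normal_integrand \<Omega> g \<longleftrightarrow>
     (\<lambda>p. g (fst p) (snd p)) \<in> borel_measurable (restrict_space lebesgue \<Omega> \<Otimes>\<^sub>M borel) \<and>
     (\<forall>x\<in>\<Omega>. lsc (g x))"

definition lipschitz_domain :: "(real^'d) set \<Rightarrow> bool" where
  "lipschitz_domain \<Omega> \<longleftrightarrow> open \<Omega> \<and> connected \<Omega> \<and> \<Omega> \<noteq> {} \<and>
     (\<forall>z\<in>frontier \<Omega>. \<exists>U R k g L. open U \<and> z \<in> U \<and> orthogonal_matrix R \<and>
        L-lipschitz_on UNIV g \<and> (\<forall>y. g y = g (\<chi> i. if i = k then 0 else y $ i)) \<and>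
        \<Omega> \<inter> U = {x\<in>U. (R *v x) $ k < g (R *v x)})"

definition DW :: "('x \<Rightarrow> real^'d^'d \<Rightarrow> ereal) \<Rightarrow> 'x \<Rightarrow> real^'d^'d \<Rightarrow> real^'d^'d" where
  "DW W x F = grad_mat (\<lambda>G. real_of_ereal (W x G)) F"

definition Bstress :: "('x \<Rightarrow> real^'d^'d \<Rightarrow> ereal) \<Rightarrow> 'x \<Rightarrow> real^'d^'d \<Rightarrow> real^'d^'d \<Rightarrow> real^'d^'d" where
  "Bstress W x F P = - (transpose (F ** matrix_inv P) ** DW W x (F ** matrix_inv P)
        ** transpose (matrix_inv P))"

end

theory Submission
  imports Defs
begin


lemma mat_sub_rdistrib: "((A::real^'n^'m) - B) ** (C::real^'p^'n) = A ** C - B ** C"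
  by (simp add: matrix_matrix_mult_def vec_eq_iff sum_subtractf left_diff_distrib)
lemma mat_sub_ldistrib: "(C::real^'n^'m) ** ((A::real^'p^'n) - B) = C ** A - C ** B"
  by (simp add: matrix_matrix_mult_def vec_eq_iff sum_subtractf right_diff_distrib)
lemma mat_add_rdistrib: "((A::real^'n^'m) + B) ** (C::real^'p^'n) = A ** C + B ** C"
  by (simp add: matrix_matrix_mult_def vec_eq_iff sum.distrib distrib_right)
lemma mat_scale_right: "(C::real^'n^'m) ** (t *\<^sub>R (A::real^'p^'n)) = t *\<^sub>R (C ** A)"
  by (simp add: matrix_matrix_mult_def vec_eq_iff sum_distrib_left mult_ac)
lemma transpose_diff': "transpose ((A::real^'n^'m) - B) = transpose A - transpose B"
  by (simp add: transpose_def vec_eq_iff)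

lemma norm_vec_sq: "(norm (v::real^'n))^2 = (\<Sum>j\<in>UNIV. (v$j)^2)"
  by (simp only: power2_norm_eq_inner inner_vec_def) (simp add: power2_eq_square)

lemma norm_row_sq: "(norm (A::real^'n^'m))^2 = (\<Sum>i\<in>UNIV. (norm (A$i))^2)"
  by (simp add: power2_norm_eq_inner inner_vec_def)
lemma norm_mat_sq: "(norm (A::real^'n^'m))^2 = (\<Sum>i\<in>UNIV. \<Sum>j\<in>UNIV. (A$i$j)^2)"
  unfolding norm_row_sq norm_vec_sq by (rule refl)

lemma norm_transpose: "norm (transpose (A::real^'n^'m)) = norm A"
proof -
  have "(norm (transpose A))^2 = (norm A)^2"
    by (simp add: norm_mat_sq transpose_def) (rule sum.swap)
  then show ?thesis by (simp add: power2_eq_iff_nonneg)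
qed

lemma norm_mat_mult: "norm ((A::real^'n^'m) ** (B::real^'p^'n)) \<le> norm A * norm B"
proof -
  define col where "col k = (\<chi> j. B$j$k)" for k
  have e: "(A ** B)$i$k = A$i \<bullet> col k" for i k
    by (simp add: matrix_matrix_mult_def inner_vec_def col_def)
  have cs: "(A$i \<bullet> col k)^2 \<le> (norm (A$i))^2 * (norm (col k))^2" for i k
  proof -
    have "\<bar>A$i \<bullet> col k\<bar>^2 \<le> (norm (A$i) * norm (col k))^2"
      by (intro power_mono Cauchy_Schwarz_ineq2) simp
    then show ?thesis by (simp add: power_mult_distrib)
  qed
  have "(norm (A**B))^2 = (\<Sum>i\<in>UNIV. \<Sum>k\<in>UNIV. (A$i \<bullet> col k)^2)"
    by (simp add: norm_mat_sq e)
  also have "\<dots> \<le> (\<Sum>i\<in>UNIV. \<Sum>k\<in>UNIV. (norm (A$i))^2 * (norm (col k))^2)"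
    by (intro sum_mono cs)
  also have "\<dots> = (\<Sum>i\<in>UNIV. (norm (A$i))^2) * (\<Sum>k\<in>UNIV. (norm (col k))^2)"
    by (simp add: sum_distrib_left sum_distrib_right) (rule sum.swap)
  also have "(\<Sum>k\<in>UNIV. (norm (col k))^2) = (norm B)^2"
    by (simp only: norm_mat_sq norm_vec_sq col_def vec_lambda_beta) (rule sum.swap)
  finally have "(norm (A**B))^2 \<le> (norm A * norm B)^2"
    by (simp only: norm_row_sq[symmetric] power_mult_distrib)
  then show ?thesis by (rule power2_le_imp_le) simp
qed

lemma inner_mult_transpose: "((A::real^'n^'m) ** transpose (B::real^'n^'p)) \<bullet> C = A \<bullet> (C ** B)"
  by (simp add: inner_vec_def matrix_matrix_mult_def transpose_def sum_distrib_left sum_distrib_right mult_ac)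
     (rule sum.cong[OF refl], rule sum.swap)

lemma inner_transpose_left: "(transpose (A::real^'n^'m) ** X) \<bullet> E = X \<bullet> (A ** E)"
  apply (simp add: inner_vec_def matrix_matrix_mult_def transpose_def sum_distrib_left sum_distrib_right mult_ac)
  apply (rule trans[OF sum.cong[OF refl sum.swap]])
  apply (rule trans[OF sum.swap])
  apply (rule sum.cong[OF refl])
  apply (rule trans[OF sum.swap])
  apply (simp add: mult_ac)
  done



lemma matrix_inv_works:
  assumes "invertible (A::real^'n^'n)"
  shows "A ** matrix_inv A = mat 1" "matrix_inv A ** A = mat 1"
  using someI_ex[OF assms[unfolded invertible_def]] unfolding matrix_inv_def by auto

lemma matrix_inv_mult:
  assumes "invertible (A::real^'n^'n)" "invertible (B::real^'n^'n)"
  shows "matrix_inv (A ** B) = matrix_inv B ** matrix_inv A"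
proof -
  have iAB: "invertible (A ** B)" using assms invertible_mult by blast
  have "(A ** B) ** (matrix_inv B ** matrix_inv A) = A ** ((B ** matrix_inv B) ** matrix_inv A)"
    by (simp add: matrix_mul_assoc)
  also have "\<dots> = mat 1" by (simp add: matrix_inv_works[OF assms(1)] matrix_inv_works[OF assms(2)])
  finally have "(A ** B) ** (matrix_inv B ** matrix_inv A) = mat 1" .
  then have "matrix_inv (A ** B) = matrix_inv (A ** B) ** ((A ** B) ** (matrix_inv B ** matrix_inv A))"
    by simp
  also have "\<dots> = matrix_inv B ** matrix_inv A"
    by (simp only: matrix_mul_assoc[of "matrix_inv (A ** B)" "A ** B"] matrix_inv_works(2)[OF iAB] matrix_mul_lid)
  finally show ?thesis .
qed

lemma det_inv_pos:
  assumes "det (A::real^'n^'n) > 0"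
  shows "invertible A" "det (matrix_inv A) > 0"
proof -
  show iA: "invertible A" using assms invertible_det_nz by force
  have "det A * det (matrix_inv A) = 1"
    by (metis det_I det_mul iA matrix_inv_works(1))
  then show "det (matrix_inv A) > 0" using assms
    by (metis zero_less_mult_pos zero_less_one)
qed

lemma inv_near_id:
  fixes N :: "real^'n^'n"
  assumes r: "norm (N - mat 1) \<le> 1/2"
  shows "invertible N" "norm (matrix_inv N - mat 1) \<le> 2 * norm (mat 1::real^'n^'n) * norm (N - mat 1)"
proof -
  have "\<forall>x. N *v x = 0 \<longrightarrow> x = 0"
  proof (intro allI impI)
    fix v :: "real^'n" assume v: "N *v v = 0"
    define V :: "real^'n^'n" where "V = (\<chi> i j. v$i)"
    have NV: "N ** V = 0"
    proof -
      have "(N ** V)$i$k = (N *v v)$i" for i k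
        by (simp add: matrix_matrix_mult_def matrix_vector_mult_def V_def)
      then show ?thesis using v by (simp add: vec_eq_iff)
    qed
    have "(N - mat 1) ** V = - V" by (simp add: mat_sub_rdistrib NV)
    then have "norm V \<le> norm (N - mat 1) * norm V"
      by (metis norm_mat_mult norm_minus_cancel)
    also have "\<dots> \<le> 1/2 * norm V" using r by (intro mult_right_mono) auto
    finally have "V = 0" by simp
    then show "v = 0" by (simp add: V_def vec_eq_iff)
  qed
  then show iN: "invertible N"
    using invertible_left_inverse matrix_left_invertible_ker by blast
  define Ni where "Ni = matrix_inv N"
  have "Ni - mat 1 = Ni ** (mat 1 - N)"
    by (simp add: mat_sub_ldistrib Ni_def matrix_inv_works[OF iN])
  then have "norm (Ni - mat 1) \<le> norm Ni * norm (N - mat 1)"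
    by (metis norm_mat_mult norm_minus_commute)
  also have "norm Ni \<le> norm (mat 1::real^'n^'n) + norm (Ni - mat 1)"
    by (metis add.commute diff_add_cancel norm_triangle_ineq)
  finally have "norm (Ni - mat 1) \<le> (norm (mat 1::real^'n^'n) + norm (Ni - mat 1)) * norm (N - mat 1)"
    by (simp add: mult_right_mono)
  then show "norm (matrix_inv N - mat 1) \<le> 2 * norm (mat 1::real^'n^'n) * norm (N - mat 1)"
    unfolding Ni_def[symmetric] using mult_left_mono[OF r norm_ge_zero[of "Ni - mat 1"]]
    by (simp add: algebra_simps)
qed

lemma mat_unit_decomp: "(H::real^'n^'n) = (\<Sum>i\<in>UNIV. \<Sum>j\<in>UNIV. H$i$j *\<^sub>R mat_unit i j)"
proof -
  have "(\<Sum>x\<in>UNIV. \<Sum>xa\<in>UNIV. if i = x \<and> ia = xa then H$x$xa else 0) = H$i$ia" for i ia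
  proof -
    have "(\<Sum>xa\<in>UNIV. if i = x \<and> ia = xa then H$x$xa else 0) = (if i = x then H$x$ia else 0)" for x
      by (cases "i = x") simp_all
    then show ?thesis by simp
  qed
  then show ?thesis
    by (simp add: vec_eq_iff mat_unit_def if_distrib cong: if_cong)
qed

lemma grad_inner:
  fixes f :: "real^'n^'n \<Rightarrow> real"
  assumes "f differentiable (at A)"
  shows "frechet_derivative f (at A) H = grad_mat f A \<bullet> H"
proof -
  define f' where "f' = frechet_derivative f (at A)"
  have lin: "linear f'" using assms unfolding f'_def
    using frechet_derivative_works has_derivative_linear by blast
  have "f' H = f' (\<Sum>i\<in>UNIV. \<Sum>j\<in>UNIV. H$i$j *\<^sub>R mat_unit i j)"
    using mat_unit_decomp[of H] by (rule arg_cong)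
  also have "\<dots> = (\<Sum>i\<in>UNIV. \<Sum>j\<in>UNIV. H$i$j * f' (mat_unit i j))"
    by (simp add: linear_sum[OF lin] linear_scale[OF lin] o_def)
  also have "\<dots> = grad_mat f A \<bullet> H"
    by (simp add: inner_vec_def grad_mat_def f'_def mult.commute)
  finally show ?thesis by (simp add: f'_def)
qed

lemma det_path_cont: "continuous_on S (\<lambda>t::real. det (mat 1 + t *\<^sub>R (E::real^'n^'n)))"
  unfolding det_def by (intro continuous_intros)



theorem lemma4p5:
  fixes \<Omega> :: "(real^'d) set"
    and K :: "real^'d^'d \<Rightarrow> ereal"
    and W :: "real^'d \<Rightarrow> real^'d^'d \<Rightarrow> ereal"
    and WW :: "real^'d \<Rightarrow> real^('d set \<times> 'd set) \<Rightarrow> ereal"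
    and j :: "real^'d \<Rightarrow> real"
    and q\<Phi> qF qP qG q\<gamma> qt C1 C2 C3 C4 C5 \<delta> :: real
  assumes dom: "lipschitz_domain \<Omega>" "bounded \<Omega>"
    and exps: "q\<Phi> > 1" "qF > 1" "qP > 1" "qG > 1" "q\<gamma> > 1" "qG > CARD('d)"
    (* (K1), (K2) *)
    and K0: "\<forall>P. K P \<noteq> -\<infinity>" "\<forall>P\<in>GLp. K P \<noteq> \<infinity>"
    and K1: "C2_on GLp (\<lambda>P. real_of_ereal (K P))"
    and K2: "C1 > 0" "C2 > 0" "qP > CARD('d)" "q\<gamma> > CARD('d)"
      "\<forall>P\<in>GLp. K P \<ge> ereal (C1 * (norm P powr qP + det P powr (- q\<gamma>)) - C2)"
    (* W: values in [0,\<infinity>], finite exactly on GL+ *)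
    and W0: "\<forall>x\<in>\<Omega>. \<forall>F. W x F \<ge> 0 \<and> (W x F < \<infinity> \<longleftrightarrow> F \<in> GLp)"
    (* (W1) *)
    and W1: "set_integrable lebesgue \<Omega> j" "qF > CARD('d)" "C3 > 0"
      "\<forall>x\<in>\<Omega>. \<forall>F. W x F \<ge> ereal (j x + C3 * norm F powr qF)"
    (* (W2) *)
    and W2: "normal_integrand \<Omega> WW" "\<forall>x\<in>\<Omega>. convex_ereal (WW x)"
      "\<forall>x\<in>\<Omega>. \<forall>F. W x F = WW x (minors F)"
    (* (W3) *)
    and W3: "\<delta> > 0" "C4 > 0" "C5 > 0"
      "\<forall>x\<in>\<Omega>. \<forall>F\<in>GLp. (\<lambda>G. real_of_ereal (W x G)) differentiable (at F)"
      "\<forall>x\<in>\<Omega>. \<forall>F\<in>GLp. norm (transpose F ** DW W x F) \<le> C4 * (real_of_ereal (W x F) + 1)"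
      "\<forall>x\<in>\<Omega>. \<forall>F\<in>GLp. \<forall>N. norm (N - mat 1) < \<delta> \<longrightarrow>
         norm (transpose F ** DW W x F - transpose (F ** N) ** DW W x (F ** N))
           \<le> C5 * norm (N - mat 1) * (real_of_ereal (W x F) + 1)"
    (* exponent relations *)
    and qrel: "1 / q\<Phi> = 1 / qF + 1 / qP" "q\<Phi> > CARD('d)"
      "qt > CARD('d)" "1 / qt = 2 / q\<gamma> + 1 / qG"
  shows
    "(\<forall>CP > 0. \<exists>CB > 0. \<exists>rb > 0. \<forall>x\<in>\<Omega>. \<forall>P\<in>GLp. \<forall>F\<in>GLp. \<forall>N.
        norm P + norm (matrix_inv P) \<le> CP \<longrightarrow> norm (N - mat 1) < rb \<longrightarrow>
        norm (Bstress W x F (N ** P) - Bstress W x F P)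
          \<le> CB * norm (N - mat 1) * (real_of_ereal (W x (F ** matrix_inv P)) + 1))
     \<and> (\<forall>CP > 0. \<exists>CW > 0. \<exists>rt > 0. \<forall>x\<in>\<Omega>. \<forall>P1\<in>GLp. \<forall>P2\<in>GLp. \<forall>F\<in>GLp.
        norm P1 + norm (matrix_inv P1) \<le> CP \<longrightarrow> norm (P1 - P2) \<le> rt \<longrightarrow>
        \<bar>real_of_ereal (W x (F ** matrix_inv P1)) - real_of_ereal (W x (F ** matrix_inv P2))
           - Bstress W x F P1 \<bullet> (P1 - P2)\<bar>
          \<le> CW * (real_of_ereal (W x (F ** matrix_inv P1)) + 1) * (norm (P1 - P2))\<^sup>2)"
proof -
  define I where "I = norm (mat 1 :: real^'d^'d)"
  have "(mat 1::real^'d^'d) $ undefined $ undefined = 1" by (simp add: mat_def)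
  then have "(mat 1::real^'d^'d) \<noteq> 0" by (metis zero_index zero_neq_one)
  then have I0: "I > 0" by (simp add: I_def)
  define w where "w x G = real_of_ereal (W x G)" for x G
  define S where "S x G = transpose G ** DW W x G" for x G
  have wpos: "w x G \<ge> 0" if "x \<in> \<Omega>" for x G
    using W0 that real_of_ereal_pos unfolding w_def by blast
  have GLmul: "F ** matrix_inv P \<in> GLp" if "F \<in> GLp" "P \<in> GLp" for F P :: "real^'d^'d"
    using that det_inv_pos(2)[of P] by (simp add: GLp_def det_mul)
  have SG: "norm (S x G) \<le> C4 * (w x G + 1)" if "x \<in> \<Omega>" "G \<in> GLp" for x G
    using W3(5) that unfolding S_def w_def by blast
  have SN: "norm (S x (G ** N) - S x G) \<le> C5 * norm (N - mat 1) * (w x G + 1)"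
    if "x \<in> \<Omega>" "G \<in> GLp" "norm (N - mat 1) < \<delta>" for x G N
    using W3(6) that unfolding S_def w_def by (metis norm_minus_commute)
  have Sinv: "S x G ** transpose (matrix_inv P) = - Bstress W x F P"
    if "G = F ** matrix_inv P" for x and F P G :: "real^'d^'d"
    using that by (simp add: Bstress_def S_def)
  show ?thesis
  proof (intro conjI allI impI)
    fix CP :: real assume CP: "CP > 0"
    define rb where "rb = min (1/2) (\<delta> / (2*I))"
    define CB where "CB = CP * (2*I*C5*(2*I) + C4*(2*I))"
    have rb0: "rb > 0" using W3(1) I0 by (simp add: rb_def)
    have CB0: "CB > 0" using CP I0 W3 by (simp add: CB_def add_pos_pos)
    show "\<exists>CB>0. \<exists>rb>0. \<forall>x\<in>\<Omega>. \<forall>P\<in>GLp. \<forall>F\<in>GLp. \<forall>N.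
        norm P + norm (matrix_inv P) \<le> CP \<longrightarrow> norm (N - mat 1) < rb \<longrightarrow>
        norm (Bstress W x F (N ** P) - Bstress W x F P)
          \<le> CB * norm (N - mat 1) * (real_of_ereal (W x (F ** matrix_inv P)) + 1)"
    proof (rule exI[of _ CB], intro conjI CB0, rule exI[of _ rb], intro conjI rb0 ballI allI impI)
      fix x :: "real^'d" and P F N :: "real^'d^'d"
      assume x: "x \<in> \<Omega>" and P: "P \<in> GLp" and F: "F \<in> GLp"
        and PC: "norm P + norm (matrix_inv P) \<le> CP" and Nr: "norm (N - mat 1) < rb"
      define Pi where "Pi = matrix_inv P"
      define G where "G = F ** Pi"
      define Ni where "Ni = matrix_inv N"
      define r where "r = norm (N - mat 1)"
      have G: "G \<in> GLp" using GLmul[OF F P] by (simp add: G_def Pi_def)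
      have iP: "invertible P" using P det_inv_pos(1) by (simp add: GLp_def)
      have r12: "r \<le> 1/2" using Nr by (simp add: r_def rb_def)
      have iN: "invertible N" using inv_near_id(1) r12 r_def by blast
      have e: "norm (Ni - mat 1) \<le> 2*I*r" using inv_near_id(2) r12 by (simp add: r_def Ni_def I_def)
      have "2*I*r < \<delta>" using Nr I0 by (simp add: r_def rb_def field_simps)
      then have eD: "norm (Ni - mat 1) < \<delta>" using e by simp
      have nNi: "norm Ni \<le> 2*I"
      proof -
        have "norm Ni \<le> norm (mat 1::real^'d^'d) + norm (Ni - mat 1)"
          by (metis add.commute diff_add_cancel norm_triangle_ineq)
        also have "\<dots> \<le> I + 2*I*(1/2)" using e r12 I0 unfolding I_def[symmetric]
          by (smt (verit) mult_left_mono)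
        finally show ?thesis by simp
      qed
      have nPi: "norm Pi \<le> CP" unfolding Pi_def using PC norm_ge_zero[of P] by linarith
      have BNP: "Bstress W x F (N ** P) = - ((S x (G ** Ni) ** transpose Ni) ** transpose Pi)"
      proof -
        have "matrix_inv (N ** P) = Pi ** Ni" by (simp add: matrix_inv_mult[OF iN iP] Pi_def Ni_def)
        then have "Bstress W x F (N ** P) = - (transpose (G ** Ni) ** DW W x (G ** Ni) ** (transpose Ni ** transpose Pi))"
          by (simp add: Bstress_def G_def matrix_mul_assoc matrix_transpose_mul)
        then show ?thesis by (simp add: S_def matrix_mul_assoc)
      qed
      have BP: "Bstress W x F P = - (S x G ** transpose Pi)"
        using Sinv[of G F P x] by (simp add: G_def Pi_def)
      have diff: "Bstress W x F (N ** P) - Bstress W x F P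
          = - (((S x (G ** Ni) - S x G) ** transpose Ni + S x G ** (transpose Ni - mat 1)) ** transpose Pi)"
        by (simp add: BNP BP mat_sub_rdistrib mat_sub_ldistrib mat_add_rdistrib)
      have "norm (Bstress W x F (N ** P) - Bstress W x F P)
          \<le> norm ((S x (G ** Ni) - S x G) ** transpose Ni + S x G ** (transpose Ni - mat 1)) * norm Pi"
        unfolding diff norm_minus_cancel by (metis norm_mat_mult norm_transpose)
      also have "\<dots> \<le> (norm (S x (G ** Ni) - S x G) * norm Ni + norm (S x G) * norm (Ni - mat 1)) * norm Pi"
      proof (rule mult_right_mono[OF _ norm_ge_zero])
        have "transpose Ni - mat 1 = transpose (Ni - mat 1)" by (simp add: transpose_diff')
        then show "norm ((S x (G ** Ni) - S x G) ** transpose Ni + S x G ** (transpose Ni - mat 1))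
          \<le> norm (S x (G ** Ni) - S x G) * norm Ni + norm (S x G) * norm (Ni - mat 1)"
          by (metis (no_types, lifting) add_mono norm_mat_mult norm_transpose norm_triangle_ineq order_trans)
      qed
      also have "\<dots> \<le> ((C5 * (2*I*r) * (w x G + 1)) * (2*I) + (C4 * (w x G + 1)) * (2*I*r)) * CP"
      proof -
        have a: "norm (S x (G ** Ni) - S x G) \<le> C5 * (2*I*r) * (w x G + 1)"
          using SN[OF x G eD] e W3 wpos[OF x] 
          by (smt (verit) mult_left_mono mult_right_mono)
        have b: "norm (S x G) \<le> C4 * (w x G + 1)" using SG[OF x G] .
        have "norm (S x (G ** Ni) - S x G) * norm Ni \<le> (C5 * (2*I*r) * (w x G + 1)) * (2*I)"
          by (rule mult_mono[OF a nNi]) (use W3 I0 wpos[OF x] r_def in auto)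
        moreover have "norm (S x G) * norm (Ni - mat 1) \<le> (C4 * (w x G + 1)) * (2*I*r)"
          by (rule mult_mono[OF b e]) (use W3 I0 wpos[OF x] r_def in auto)
        ultimately have "norm (S x (G ** Ni) - S x G) * norm Ni + norm (S x G) * norm (Ni - mat 1)
           \<le> (C5 * (2*I*r) * (w x G + 1)) * (2*I) + (C4 * (w x G + 1)) * (2*I*r)" by (rule add_mono)
        then show ?thesis
          by (rule mult_mono[OF _ nPi]) (use W3 I0 wpos[OF x] r_def in auto)
      qed
      also have "\<dots> = CB * r * (w x G + 1)" by (simp add: CB_def algebra_simps)
      finally show "norm (Bstress W x F (N ** P) - Bstress W x F P)
          \<le> CB * norm (N - mat 1) * (real_of_ereal (W x (F ** matrix_inv P)) + 1)"
        by (simp add: r_def w_def G_def Pi_def)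
    qed
  next
    show "\<exists>CW>0. \<exists>rt>0. \<forall>x\<in>\<Omega>. \<forall>P1\<in>GLp. \<forall>P2\<in>GLp. \<forall>F\<in>GLp.
        norm P1 + norm (matrix_inv P1) \<le> CP \<longrightarrow> norm (P1 - P2) \<le> rt \<longrightarrow>
        \<bar>real_of_ereal (W x (F ** matrix_inv P1)) - real_of_ereal (W x (F ** matrix_inv P2))
           - Bstress W x F P1 \<bullet> (P1 - P2)\<bar>
          \<le> CW * (real_of_ereal (W x (F ** matrix_inv P1)) + 1) * (norm (P1 - P2))\<^sup>2"
      if CP: "CP > 0" for CP
    proof -
      define r0 where "r0 = min (1/2) (min (\<delta>/(4*I)) (1/(4*I)))"
      define rt where "rt = r0 / CP"
      define K1 where "K1 = 2*I*(C4 + C5*\<delta>) + C5"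
      define CW where "CW = (2*I*C4 + K1*(4*I^2)) * CP^2"
      have r00: "r0 > 0" using W3(1) I0 by (simp add: r0_def)
      have rt0: "rt > 0" using r00 CP by (simp add: rt_def)
      have K10: "K1 > 0" using W3 I0 by (simp add: K1_def add_pos_pos)
      have CW0: "CW > 0" using W3 I0 K10 CP by (simp add: CW_def add_pos_pos)
      show ?thesis
      proof (rule exI[of _ CW], intro conjI CW0, rule exI[of _ rt], intro conjI rt0 ballI allI impI)
        fix x :: "real^'d" and P1 P2 F :: "real^'d^'d"
        assume x: "x \<in> \<Omega>" and P1: "P1 \<in> GLp" and P2: "P2 \<in> GLp" and F: "F \<in> GLp"
          and PC: "norm P1 + norm (matrix_inv P1) \<le> CP" and Dr: "norm (P1 - P2) \<le> rt"
        define D where "D = P1 - P2"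
        define d where "d = norm D"
        define P1i where "P1i = matrix_inv P1"
        define G where "G = F ** P1i"
        define N where "N = P2 ** P1i"
        define Ni where "Ni = matrix_inv N"
        define E where "E = Ni - mat 1"
        define \<rho> where "\<rho> = norm (N - mat 1)"
        define wG where "wG = w x G"
        have wG0: "wG \<ge> 0" using wpos[OF x] by (simp add: wG_def)
        have G: "G \<in> GLp" using GLmul[OF F P1] by (simp add: G_def P1i_def)
        have iP1: "invertible P1" using P1 det_inv_pos(1) by (simp add: GLp_def)
        have nP1i: "norm P1i \<le> CP" unfolding P1i_def using PC norm_ge_zero[of P1] by linarith
        have "N - mat 1 = (P2 - P1) ** P1i"
          by (simp add: N_def mat_sub_rdistrib P1i_def matrix_inv_works[OF iP1])
        then have "\<rho> \<le> norm (P2 - P1) * norm P1i"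
          unfolding \<rho>_def using norm_mat_mult[of "P2 - P1" P1i] by simp
        also have "\<dots> \<le> d * CP"
          unfolding d_def D_def norm_minus_commute[of P2 P1] by (rule mult_left_mono[OF nP1i norm_ge_zero])
        finally have \<rho>d: "\<rho> \<le> d * CP" .
        have "d * CP \<le> r0" using Dr CP by (simp add: d_def D_def rt_def field_simps)
        then have \<rho>r0: "\<rho> \<le> r0" using \<rho>d by linarith
        have \<rho>0: "\<rho> \<ge> 0" by (simp add: \<rho>_def)
        have \<rho>12: "\<rho> \<le> 1/2" using \<rho>r0 by (simp add: r0_def)
        have iN: "invertible N" using inv_near_id(1) \<rho>12 \<rho>_def by blast
        have eE: "norm E \<le> 2*I*\<rho>" using inv_near_id(2)[of N] \<rho>12
          by (simp add: \<rho>_def E_def Ni_def I_def)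
        have "2*I*\<rho> \<le> 2*I*r0" using \<rho>r0 I0 by simp
        have "r0 \<le> \<delta>/(4*I)" "r0 \<le> 1/(4*I)" by (simp_all add: r0_def)
        then have "r0 * (4*I) \<le> \<delta>" "r0 * (4*I) \<le> 1" using I0 by (simp_all add: pos_le_divide_eq)
        then have Eh: "norm E \<le> \<delta>/2" and E12: "norm E \<le> 1/2"
          using eE \<open>2*I*\<rho> \<le> 2*I*r0\<close> by (simp_all add: algebra_simps)
        have P2N: "P2 = N ** P1"
          by (simp add: N_def P1i_def matrix_mul_assoc[symmetric] matrix_inv_works[OF iP1])
        have FP2: "F ** matrix_inv P2 = G ** Ni"
          by (simp add: P2N matrix_inv_mult[OF iN iP1] G_def Ni_def P1i_def matrix_mul_assoc)
        define M where "M t = mat 1 + t *\<^sub>R E" for t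
        define p where "p t = G + t *\<^sub>R (G ** E)" for t
        have pM: "p t = G ** M t" for t
          by (simp add: p_def M_def matrix_add_ldistrib mat_scale_right)
        have Mnear: "norm (M t - mat 1) \<le> norm E" if "0 \<le> t" "t \<le> 1" for t
          using that by (simp add: M_def mult_left_le_one_le)
        have Minv: "invertible (M t)" if "0 \<le> t" "t \<le> 1" for t
          using inv_near_id(1)[of "M t"] Mnear[OF that] E12 by simp
        have Mdet: "det (M t) > 0" if t0: "0 \<le> t" "t \<le> 1" for t
        proof (rule ccontr)
          assume "\<not> det (M t) > 0"
          then have "det (M t) \<le> 0" by simp
          moreover have "det (M 0) = 1" by (simp add: M_def)
          ultimately have "\<exists>s. 0 \<le> s \<and> s \<le> t \<and> det (M s) = 0"
            using IVT2'[of "\<lambda>t. det (M t)" t 0 0] t0 det_path_cont[of "{0..t}" E]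
            unfolding M_def by simp
          then obtain s where s: "0 \<le> s" "s \<le> t" "det (M s) = 0" by blast
          then show False using Minv[of s] t0 invertible_det_nz by force
        qed
        have pGL: "p t \<in> GLp" if "0 \<le> t" "t \<le> 1" for t
          using G Mdet[OF that] by (simp add: pM GLp_def det_mul)
        define fd where "fd t = frechet_derivative (w x) (at (p t))" for t
        have wdiff: "w x differentiable (at (p t))" if "0 \<le> t" "t \<le> 1" for t
        proof -
          have "w x = (\<lambda>G. real_of_ereal (W x G))" by (simp add: w_def fun_eq_iff)
          then show ?thesis using W3(4) x pGL[OF that] by simp
        qed
        have deriv: "((\<lambda>t. w x (p t)) has_derivative (\<lambda>s. fd t (s *\<^sub>R (G ** E)))) (at t within {0..1})"
          if "0 \<le> t" "t \<le> 1" for t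
        proof -
          have dp: "(p has_derivative (\<lambda>s. s *\<^sub>R (G ** E))) (at t)"
            unfolding p_def by (auto intro!: derivative_eq_intros)
          have dw: "(w x has_derivative fd t) (at (p t))"
            using wdiff[OF that] unfolding fd_def frechet_derivative_works .
          have "((w x \<circ> p) has_derivative (fd t \<circ> (\<lambda>s. s *\<^sub>R (G ** E)))) (at t)"
            by (rule diff_chain_at[OF dp dw])
          then show ?thesis by (auto simp: o_def intro: has_derivative_at_withinI)
        qed
        obtain \<xi> where \<xi>: "\<xi> \<in> {0<..<1}" "w x (p 1) - w x (p 0) = fd \<xi> ((1 - 0) *\<^sub>R (G ** E))"
          using mvt_simple[of 0 1 "\<lambda>t. w x (p t)" "\<lambda>t s. fd t (s *\<^sub>R (G ** E))"] deriv by auto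
        have \<xi>01: "0 \<le> \<xi>" "\<xi> \<le> 1" using \<xi>(1) by auto
        define M\<xi> where "M\<xi> = M \<xi>"
        define Mi where "Mi = matrix_inv M\<xi>"
        have iM: "invertible M\<xi>" using Minv[OF \<xi>01] by (simp add: M\<xi>_def)
        have nM: "norm (M\<xi> - mat 1) \<le> norm E" using Mnear[OF \<xi>01] by (simp add: M\<xi>_def)
        have nMd: "norm (M\<xi> - mat 1) < \<delta>" using nM Eh W3(1) by simp
        have nMi: "norm (Mi - mat 1) \<le> 2*I*norm E"
          using inv_near_id(2)[of M\<xi>] nM E12 I0 unfolding Mi_def I_def[symmetric]
          by (smt (verit) mult_left_mono)
        define R where "R = transpose G ** DW W x (G ** M\<xi>) - S x G"
        have p1: "p 1 = G ** Ni" by (simp add: p_def E_def mat_sub_ldistrib)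
        have p0: "p 0 = G" by (simp add: p_def)
        have fdE: "fd \<xi> (G ** E) = (S x G + R) \<bullet> E"
        proof -
          have "w x = (\<lambda>G. real_of_ereal (W x G))" by (simp add: w_def fun_eq_iff)
          then have "fd \<xi> (G ** E) = DW W x (p \<xi>) \<bullet> (G ** E)"
            using grad_inner[OF wdiff[OF \<xi>01]] by (simp add: fd_def DW_def)
          also have "\<dots> = (transpose G ** DW W x (G ** M\<xi>)) \<bullet> E"
            by (simp add: inner_transpose_left pM M\<xi>_def)
          finally show ?thesis by (simp add: R_def)
        qed
        have phi: "w x (G ** Ni) - wG = (S x G + R) \<bullet> E"
          using \<xi>(2) fdE p1 p0 by (simp add: wG_def)
        have Rform: "R = (transpose Mi - mat 1) ** S x (G ** M\<xi>) + (S x (G ** M\<xi>) - S x G)"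
        proof -
          have "transpose Mi ** S x (G ** M\<xi>) = transpose G ** DW W x (G ** M\<xi>)"
          proof -
            have "transpose Mi ** S x (G ** M\<xi>)
                = (transpose (M\<xi> ** Mi)) ** (transpose G ** DW W x (G ** M\<xi>))"
              by (simp add: S_def matrix_transpose_mul matrix_mul_assoc)
            then show ?thesis by (simp add: Mi_def matrix_inv_works[OF iM])
          qed
          then show ?thesis by (simp add: R_def mat_sub_rdistrib)
        qed
        have nR: "norm R \<le> K1 * norm E * (wG + 1)"
        proof -
          have a: "norm (S x (G ** M\<xi>) - S x G) \<le> C5 * norm E * (wG + 1)"
            using SN[OF x G nMd] nM W3 wG0 unfolding wG_def
            by (smt (verit) mult_left_mono mult_right_mono)
          have b: "norm (S x (G ** M\<xi>)) \<le> (C4 + C5*\<delta>) * (wG + 1)"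
          proof -
            have "norm (S x (G ** M\<xi>)) \<le> norm (S x G) + norm (S x (G ** M\<xi>) - S x G)"
              by (metis add.commute diff_add_cancel norm_triangle_ineq)
            moreover have "C5 * norm E * (wG + 1) \<le> C5 * \<delta> * (wG + 1)"
              using Eh W3 wG0 by (intro mult_right_mono mult_left_mono) auto
            ultimately show ?thesis using SG[OF x G] a unfolding wG_def by (simp add: algebra_simps)
          qed
          have c: "norm (transpose Mi - mat 1) \<le> 2*I*norm E"
            using nMi by (metis norm_transpose transpose_diff' transpose_mat)
          have "norm R \<le> norm (transpose Mi - mat 1) * norm (S x (G ** M\<xi>)) + norm (S x (G ** M\<xi>) - S x G)"
            unfolding Rform using norm_triangle_ineq[of "(transpose Mi - mat 1) ** S x (G ** M\<xi>)" "S x (G ** M\<xi>) - S x G"]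
              norm_mat_mult[of "transpose Mi - mat 1" "S x (G ** M\<xi>)"] by linarith
          also have "\<dots> \<le> (2*I*norm E) * ((C4 + C5*\<delta>) * (wG + 1)) + C5 * norm E * (wG + 1)"
            by (intro add_mono mult_mono c b a) (use I0 in auto)
          also have "\<dots> = K1 * norm E * (wG + 1)" by (simp add: K1_def algebra_simps)
          finally show ?thesis .
        qed
        have Bst: "Bstress W x F P1 \<bullet> D = - (S x G \<bullet> (mat 1 - N))"
        proof -
          have "Bstress W x F P1 = - (S x G ** transpose P1i)"
            using Sinv[of G F P1 x] by (simp add: G_def P1i_def)
          moreover have "D ** P1i = mat 1 - N"
            by (simp add: D_def N_def mat_sub_rdistrib P1i_def matrix_inv_works[OF iP1])
          ultimately show ?thesis by (simp add: inner_mult_transpose)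
        qed
        have EN: "E + (N - mat 1) = (mat 1 - Ni) ** (N - mat 1)"
          by (simp add: E_def mat_sub_rdistrib mat_sub_ldistrib Ni_def matrix_inv_works[OF iN])
        have T: "wG - w x (G ** Ni) - Bstress W x F P1 \<bullet> D
            = - (S x G \<bullet> ((mat 1 - Ni) ** (N - mat 1))) - R \<bullet> E"
        proof -
          have 1: "S x G \<bullet> ((mat 1 - Ni) ** (N - mat 1)) = S x G \<bullet> E + (S x G \<bullet> N - S x G \<bullet> mat 1)"
            by (simp only: EN[symmetric] inner_add_right inner_diff_right)
          have 2: "Bstress W x F P1 \<bullet> D = - (S x G \<bullet> mat 1 - S x G \<bullet> N)"
            using Bst by (simp only: inner_diff_right)
          have 3: "w x (G ** Ni) - wG = S x G \<bullet> E + R \<bullet> E"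
            using phi by (simp only: inner_add_left)
          show ?thesis using 1 2 3 by linarith
        qed
        have "\<bar>wG - w x (G ** Ni) - Bstress W x F P1 \<bullet> D\<bar>
            \<le> norm (S x G) * (norm (mat 1 - Ni) * \<rho>) + norm R * norm E"
        proof -
          have "\<bar>S x G \<bullet> ((mat 1 - Ni) ** (N - mat 1))\<bar> \<le> norm (S x G) * (norm (mat 1 - Ni) * \<rho>)"
            unfolding \<rho>_def
            using Cauchy_Schwarz_ineq2[of "S x G" "(mat 1 - Ni) ** (N - mat 1)"]
              mult_left_mono[OF norm_mat_mult[of "mat 1 - Ni" "N - mat 1"] norm_ge_zero[of "S x G"]]
            by linarith
          moreover have "\<bar>R \<bullet> E\<bar> \<le> norm R * norm E" by (rule Cauchy_Schwarz_ineq2)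
          ultimately show ?thesis unfolding T by linarith
        qed
        also have "\<dots> \<le> (C4 * (wG + 1)) * ((2*I*\<rho>) * \<rho>) + (K1 * (2*I*\<rho>) * (wG + 1)) * (2*I*\<rho>)"
        proof (intro add_mono mult_mono)
          show "norm (S x G) \<le> C4 * (wG + 1)" using SG[OF x G] by (simp add: wG_def)
          show "norm (mat 1 - Ni) \<le> 2*I*\<rho>" using eE by (simp add: E_def norm_minus_commute)
          show "norm R \<le> K1 * (2*I*\<rho>) * (wG + 1)"
            using nR eE K10 wG0 by (smt (verit) mult_left_mono mult_right_mono)
          show "norm E \<le> 2*I*\<rho>" by (rule eE)
        qed (use I0 \<rho>0 K10 W3 wG0 in auto)
        also have "\<dots> = (2*I*C4 + K1*(4*I^2)) * (wG + 1) * \<rho>^2"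
          by (simp add: algebra_simps power2_eq_square)
        also have "\<dots> \<le> (2*I*C4 + K1*(4*I^2)) * (wG + 1) * (d * CP)^2"
          by (intro mult_left_mono power_mono \<rho>d \<rho>0) (use I0 K10 W3 wG0 in auto)
        also have "\<dots> = CW * (wG + 1) * d^2" by (simp add: CW_def power_mult_distrib)
        finally show "\<bar>real_of_ereal (W x (F ** matrix_inv P1)) - real_of_ereal (W x (F ** matrix_inv P2))
           - Bstress W x F P1 \<bullet> (P1 - P2)\<bar>
          \<le> CW * (real_of_ereal (W x (F ** matrix_inv P1)) + 1) * (norm (P1 - P2))\<^sup>2"
          by (simp add: FP2 wG_def w_def G_def P1i_def D_def d_def)
      qed
    qed
  qed
qed

end
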